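(* Let $f$ be as in the standing setting and quasi-strongly convex on $X$ with constant $\kappa_f>0$; let $\mu_f=\kappa_f/L_f$. Consider the fast gradient method: $x^0=y^0\in X$ and for $k\ge0$ $$x^{k+1}=\big[y^k-\tfrac1{L_f}\nabla f(y^k)\big]_X,\qquad y^{k+1}=x^{k+1}+\beta\,(x^{k+1}-x^k),\qquad \beta=\frac{\sqrt{L_f}-\sqrt{\kappa_f}}{\sqrt{L_f}+\sqrt{\kappa_f}}.$$ Assume that all iterates $y^k$ lie in $X$ and have the same projection onto $X^*$, i.e. $[y^k]_{X^*}=[y^0]_{X^*}$ for all $k\ge0$. Then $$f(x^k)-f^*\le\big(1-\sqrt{\mu_f}\big)^k\cdot 2\big(f(x^0)-f^*\big)\qquad\forall k\ge0.$$
   Context: Standing setting: $X\subseteq\mathbb{R}^n$ is a nonempty closed convex set; $f:X\to\mathbb{R}$ is convex and continuously differentiable, with $L_f$-Lipschitz continuous gradient on $X$ ($L_f>0$). Consider $f^*=\min_{x\in X}f(x)$ with optimal set $X^*$ nonempty and closed and $f^*$ finite. $\|\cdot\|$ is the Euclidean norm, $[u]_S$ is the Euclidean projection onto a closed convex set $S$, and $\bar x=[x]_{X^*}$. Quasi-strong convexity with constant $\kappa_f$: $f^*\ge f(x)+\langle\nabla f(x),\bar x-x\rangle+\frac{\kappa_f}{2}\|x-\bar x\|^2$ for all $x\in X$ (this forces $\kappa_f\le L_f$). *)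

theory Defs
  imports "HOL-Analysis.Analysis"
begin

definition proj :: "'a::euclidean_space set \<Rightarrow> 'a \<Rightarrow> 'a" where
  "proj S u = closest_point S u"

definition optset :: "'a set \<Rightarrow> ('a \<Rightarrow> real) \<Rightarrow> 'a set" where
  "optset X f = {x \<in> X. \<forall>y\<in>X. f x \<le> f y}"

definition quasi_strongly_convex ::
  "'a::euclidean_space set \<Rightarrow> ('a \<Rightarrow> real) \<Rightarrow> ('a \<Rightarrow> 'a) \<Rightarrow> real \<Rightarrow> bool" where
  "quasi_strongly_convex X f g \<kappa> \<longleftrightarrow>
     (\<forall>x\<in>X. let xb = proj (optset X f) x in
        (INF z\<in>X. f z) \<ge> f x + g x \<bullet> (xb - x) + \<kappa> / 2 * (norm (x - xb))\<^sup>2)"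

end

theory Submission
  imports Defs
begin

lemma seg_deriv:
  fixes f :: "'a::euclidean_space \<Rightarrow> real"
  assumes cX: "convex X" and u: "u \<in> X" and w: "w \<in> X"
    and fg: "\<And>z. z \<in> X \<Longrightarrow> (f has_derivative (\<lambda>h. g z \<bullet> h)) (at z within X)"
    and t: "t \<in> {0..1}"
  shows "((\<lambda>t. f (u + t *\<^sub>R (w - u))) has_derivative
           (\<lambda>h. h * (g (u + t *\<^sub>R (w - u)) \<bullet> (w - u)))) (at t within {0..1})"
proof -
  have sub: "(\<lambda>t. u + t *\<^sub>R (w - u)) ` {0..1} \<subseteq> X"
  proof
    fix z assume "z \<in> (\<lambda>t. u + t *\<^sub>R (w - u)) ` {0..1}"
    then obtain s where s: "s \<in> {0..1}" "z = u + s *\<^sub>R (w - u)" by auto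
    have "z = (1 - s) *\<^sub>R u + s *\<^sub>R w" using s by (simp add: algebra_simps)
    then show "z \<in> X" using s cX u w by (auto intro: convexD_alt)
  qed
  have d: "((\<lambda>t. u + t *\<^sub>R (w - u)) has_derivative (\<lambda>h. h *\<^sub>R (w - u))) (at t within {0..1})"
    by (auto intro!: derivative_eq_intros)
  have "((\<lambda>t. f (u + t *\<^sub>R (w - u))) has_derivative
           (\<lambda>h. g (u + t *\<^sub>R (w - u)) \<bullet> (h *\<^sub>R (w - u)))) (at t within {0..1})"
    by (rule has_derivative_in_compose2[OF fg sub t d])
  then show ?thesis by (simp add: algebra_simps)
qed

lemma grad_ineq:
  fixes f :: "'a::euclidean_space \<Rightarrow> real"
  assumes cX: "convex X" and u: "u \<in> X" and w: "w \<in> X" and fc: "convex_on X f"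
    and fg: "\<And>z. z \<in> X \<Longrightarrow> (f has_derivative (\<lambda>h. g z \<bullet> h)) (at z within X)"
  shows "f u + g u \<bullet> (w - u) \<le> f w"
proof -
  define \<phi> where "\<phi> = (\<lambda>t. f (u + t *\<^sub>R (w - u)))"
  have d0: "(\<phi> has_derivative (\<lambda>h. h * (g u \<bullet> (w - u)))) (at 0 within {0..1})"
    using seg_deriv[OF cX u w fg, of 0] by (simp add: \<phi>_def)
  have fd: "(\<phi> has_field_derivative (g u \<bullet> (w - u))) (at 0 within {0..1})"
  proof -
    have e: "(\<lambda>h. h * (g u \<bullet> (w - u))) = (*) (g u \<bullet> (w - u))" by (auto simp: mult.commute)
    show ?thesis using d0 e by (simp add: has_field_derivative_def)
  qed
  then have lim: "((\<lambda>t. (\<phi> t - \<phi> 0) / t) \<longlongrightarrow> g u \<bullet> (w - u)) (at_right 0)"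
    if "(\<phi> has_field_derivative (g u \<bullet> (w - u))) (at 0 within {0..1})"
    using that unfolding has_field_derivative_iff at_within_Icc_at_right[OF zero_less_one] by simp
  have ev: "eventually (\<lambda>t. (\<phi> t - \<phi> 0) / t \<le> \<phi> 1 - \<phi> 0) (at_right 0)"
    unfolding eventually_at_right[OF zero_less_one]
  proof (intro exI[of _ 1] conjI allI impI)
    fix t :: real assume t0: "0 < t" and t1: "t < 1"
    note t = t0 t1
    have "\<phi> t = f ((1 - t) *\<^sub>R u + t *\<^sub>R w)" by (simp add: \<phi>_def algebra_simps)
    also have "\<dots> \<le> (1 - t) * f u + t * f w"
      using fc u w t by (intro convex_onD[OF fc]) auto
    finally have "\<phi> t - \<phi> 0 \<le> t * (\<phi> 1 - \<phi> 0)" by (simp add: \<phi>_def algebra_simps)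
    then show "(\<phi> t - \<phi> 0) / t \<le> \<phi> 1 - \<phi> 0" using t by (simp add: divide_simps mult.commute)
  qed simp
  have "g u \<bullet> (w - u) \<le> \<phi> 1 - \<phi> 0"
    by (rule tendsto_upperbound[OF lim[OF fd] ev]) simp
  then show ?thesis by (simp add: \<phi>_def)
qed

lemma descent:
  fixes f :: "'a::euclidean_space \<Rightarrow> real"
  assumes cX: "convex X" and u: "u \<in> X" and w: "w \<in> X"
    and fg: "\<And>z. z \<in> X \<Longrightarrow> (f has_derivative (\<lambda>h. g z \<bullet> h)) (at z within X)"
    and lip: "\<And>a b. a \<in> X \<Longrightarrow> b \<in> X \<Longrightarrow> norm (g a - g b) \<le> L * norm (a - b)"
  shows "f w \<le> f u + g u \<bullet> (w - u) + L / 2 * (norm (w - u))\<^sup>2"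
proof -
  define h where "h t = f (u + t *\<^sub>R (w - u)) - t * (g u \<bullet> (w - u)) - L / 2 * t\<^sup>2 * (norm (w - u))\<^sup>2" for t
  have dh: "(h has_derivative (\<lambda>s. s * (g (u + t *\<^sub>R (w - u)) \<bullet> (w - u)) - s * (g u \<bullet> (w - u))
            - s * (L * t * (norm (w - u))\<^sup>2))) (at t within {0..1})" if "t \<in> {0..1}" for t
  proof -
    have a: "((\<lambda>t. f (u + t *\<^sub>R (w - u))) has_derivative
           (\<lambda>h. h * (g (u + t *\<^sub>R (w - u)) \<bullet> (w - u)))) (at t within {0..1})"
      by (rule seg_deriv[OF cX u w fg that])
    have b: "((\<lambda>t. t * (g u \<bullet> (w - u))) has_derivative (\<lambda>s. s * (g u \<bullet> (w - u)))) (at t within {0..1})"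
      by (auto intro!: derivative_eq_intros)
    have c: "((\<lambda>t. L / 2 * t\<^sup>2 * (norm (w - u))\<^sup>2) has_derivative (\<lambda>s. s * (L * t * (norm (w - u))\<^sup>2))) (at t within {0..1})"
      by (rule has_derivative_eq_rhs, (rule derivative_eq_intros)+) (auto simp: algebra_simps)
    show ?thesis unfolding h_def by (rule has_derivative_diff[OF has_derivative_diff[OF a b] c])
  qed
  obtain t where t: "t \<in> {0..1}" and eq: "h 1 - h 0 = (g (u + t *\<^sub>R (w - u)) \<bullet> (w - u)) - (g u \<bullet> (w - u))
            - (L * t * (norm (w - u))\<^sup>2)"
    using mvt_very_simple[of 0 1 h, OF _ dh] by auto
  have ut: "u + t *\<^sub>R (w - u) \<in> X"
    using t cX u w convexD_alt[of X u w t] by (simp add: algebra_simps)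
  have "(g (u + t *\<^sub>R (w - u)) - g u) \<bullet> (w - u) \<le> norm (g (u + t *\<^sub>R (w - u)) - g u) * norm (w - u)"
    by (rule norm_cauchy_schwarz)
  also have "\<dots> \<le> L * norm (t *\<^sub>R (w - u)) * norm (w - u)"
    using lip[OF ut u] by (intro mult_right_mono) auto
  also have "\<dots> = L * t * (norm (w - u))\<^sup>2" using t by (simp add: power2_eq_square)
  finally have "h 1 - h 0 \<le> 0" using eq by (simp add: inner_diff_left)
  then show ?thesis by (simp add: h_def)
qed


lemma proj_step:
  fixes f :: "'a::euclidean_space \<Rightarrow> real"
  assumes cX: "convex X" and clX: "closed X" and y: "y \<in> X" and z: "z \<in> X" and L: "L > 0"
    and fg: "\<And>z. z \<in> X \<Longrightarrow> (f has_derivative (\<lambda>h. g z \<bullet> h)) (at z within X)"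
    and lip: "\<And>a b. a \<in> X \<Longrightarrow> b \<in> X \<Longrightarrow> norm (g a - g b) \<le> L * norm (a - b)"
    and xp: "xp = closest_point X (y - (1 / L) *\<^sub>R g y)"
  shows "f xp \<le> f y + g y \<bullet> (z - y) + L * ((y - xp) \<bullet> (y - z)) - L / 2 * ((y - xp) \<bullet> (y - xp))"
proof -
  have xpX: "xp \<in> X" using xp closest_point_in_set[OF clX] y by auto
  have d: "f xp \<le> f y + g y \<bullet> (xp - y) + L / 2 * (norm (xp - y))\<^sup>2"
    by (rule descent[OF cX y xpX fg lip])
  have vi: "((y - (1 / L) *\<^sub>R g y) - xp) \<bullet> (z - xp) \<le> 0"
    using closest_point_dot[OF cX clX z, of "y - (1 / L) *\<^sub>R g y"] xp by simp
  then have "(y - xp) \<bullet> (z - xp) - (1 / L) * (g y \<bullet> (z - xp)) \<le> 0"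
    by (simp add: inner_diff_left algebra_simps)
  then have vi2: "g y \<bullet> (xp - z) \<le> L * ((y - xp) \<bullet> (xp - z))"
    using L by (simp add: field_simps inner_diff_right inner_diff_left)
  have "(norm (xp - y))\<^sup>2 = (y - xp) \<bullet> (y - xp)"
    by (simp add: power2_norm_eq_inner inner_diff_left inner_diff_right inner_commute)
  moreover have "g y \<bullet> (xp - y) = g y \<bullet> (z - y) + g y \<bullet> (xp - z)"
    by (simp add: inner_diff_right)
  moreover have "(y - xp) \<bullet> (xp - z) = (y - xp) \<bullet> (y - z) - (y - xp) \<bullet> (y - xp)"
    by (simp add: inner_diff_right)
  ultimately have "f xp \<le> f y + g y \<bullet> (z - y) + g y \<bullet> (xp - z) + L / 2 * ((y - xp) \<bullet> (y - xp))"
    and "g y \<bullet> (xp - z) \<le> L * ((y - xp) \<bullet> (y - z)) - L * ((y - xp) \<bullet> (y - xp))"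
    using d vi2 by (simp_all add: right_diff_distrib)
  then show ?thesis by linarith
qed

lemma optset_convex:
  assumes cX: "convex X" and fc: "convex_on X f"
  shows "convex (optset X f)"
  unfolding convex_alt
proof (intro ballI allI impI)
  fix a b and u :: real assume a: "a \<in> optset X f" and b: "b \<in> optset X f" and u: "0 \<le> u \<and> u \<le> 1"
  have aX: "a \<in> X" and bX: "b \<in> X" using a b by (auto simp: optset_def)
  have fab: "f a = f b" using a b aX bX unfolding optset_def by (auto intro: antisym)
  have mX: "(1 - u) *\<^sub>R a + u *\<^sub>R b \<in> X" using cX aX bX u by (auto intro: convexD_alt)
  have "f ((1 - u) *\<^sub>R a + u *\<^sub>R b) \<le> (1 - u) * f a + u * f b"
    using u aX bX by (intro convex_onD[OF fc]) auto
  also have "\<dots> = f a" using fab by (simp add: algebra_simps)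
  finally show "(1 - u) *\<^sub>R a + u *\<^sub>R b \<in> optset X f"
    using mX a unfolding optset_def by (auto intro: order_trans)
qed

lemma closest_point_segment:
  fixes a :: "'a::euclidean_space"
  assumes cS: "convex S" and clS: "closed S" and ne: "S \<noteq> {}" and p: "p = closest_point S a"
    and t: "0 \<le> t" "t \<le> 1"
  shows "closest_point S (p + t *\<^sub>R (a - p)) = p"
proof -
  let ?z = "p + t *\<^sub>R (a - p)"
  have pS: "p \<in> S" using p closest_point_in_set[OF clS ne] by auto
  have "\<forall>s\<in>S. dist ?z p \<le> dist ?z s"
  proof
    fix s assume s: "s \<in> S"
    have "dist a p \<le> dist a s" using closest_point_le[OF clS s] p by simp
    also have "\<dots> \<le> dist a ?z + dist ?z s" by (rule dist_triangle)
    finally have 1: "dist a p \<le> dist a ?z + dist ?z s" .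
    have "a - ?z = (1 - t) *\<^sub>R (a - p)" by (simp add: algebra_simps)
    then have 2: "dist a ?z = (1 - t) * dist a p" using t by (simp add: dist_norm)
    have 3: "dist ?z p = t * dist a p" using t by (simp add: dist_norm norm_minus_commute)
    show "dist ?z p \<le> dist ?z s" using 1 2 3 by (simp add: algebra_simps)
  qed
  then show ?thesis using closest_point_unique[OF cS clS pS] by auto
qed


lemma inf_eq_opt:
  assumes "p \<in> optset X f"
  shows "(INF z\<in>X. f z) = f p"
  using assms unfolding optset_def by (intro cInf_eq_minimum) auto

lemma limit_arg:
  fixes P c :: real
  assumes H: "\<And>r m. 0 < r \<Longrightarrow> r < 1 \<Longrightarrow> c * (r * (1 - r ^ m)) \<le> P" and c: "c \<ge> 0"
  shows "c \<le> P"
proof (rule ccontr)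
  assume "\<not> c \<le> P"
  then have cP: "P < c" by simp
  then have c0: "c > 0" using H[of "1/2" 0] by simp
  define \<delta> where "\<delta> = max (P / c) 0"
  have d1: "\<delta> < 1" using cP c0 by (simp add: \<delta>_def divide_less_eq)
  have d0: "\<delta> \<ge> 0" by (simp add: \<delta>_def)
  define r where "r = (1 + \<delta>) / 2"
  have r0: "0 < r" and r1: "r < 1" and rd: "\<delta> < r" using d0 d1 by (simp_all add: r_def)
  have "1 - \<delta> / r > 0" using rd r0 by (simp add: field_simps)
  then obtain m where m: "r ^ m < 1 - \<delta> / r" using real_arch_pow_inv[OF _ r1] by blast
  have "r * (1 - r ^ m) > r * (\<delta> / r)" using m r0 by (intro mult_strict_left_mono) auto
  then have "r * (1 - r ^ m) > \<delta>" using r0 by simp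
  then have "c * (r * (1 - r ^ m)) > c * \<delta>" using c0 by simp
  moreover have "c * \<delta> \<ge> P" using c0 by (simp add: \<delta>_def field_simps max_def)
  ultimately show False using H[OF r0 r1, of m] by simp
qed

lemma quad_growth:
  fixes f :: "'a::euclidean_space \<Rightarrow> real"
  assumes cX: "convex X" and fc: "convex_on X f"
    and fg: "\<And>z. z \<in> X \<Longrightarrow> (f has_derivative (\<lambda>h. g z \<bullet> h)) (at z within X)"
    and x: "x \<in> X" and ne: "optset X f \<noteq> {}" and clS: "closed (optset X f)"
    and qsc: "quasi_strongly_convex X f g \<kappa>" and \<kappa>: "\<kappa> \<ge> 0"
    and p: "p = proj (optset X f) x"
  shows "\<kappa> / 2 * (norm (x - p))\<^sup>2 \<le> f x - f p"
proof -
  let ?S = "optset X f"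
  have cS: "convex ?S" by (rule optset_convex[OF cX fc])
  have pS: "p \<in> ?S" using p closest_point_in_set[OF clS ne] by (simp add: proj_def)
  have pX: "p \<in> X" using pS by (simp add: optset_def)
  have pmin: "\<And>z. z \<in> X \<Longrightarrow> f p \<le> f z" using pS by (simp add: optset_def)
  have inf: "(INF z\<in>X. f z) = f p" by (rule inf_eq_opt[OF pS])
  define D where "D = x - p"
  define c where "c = \<kappa> / 2 * (norm D)\<^sup>2"
  define xt where "xt t = p + t *\<^sub>R D" for t :: real
  define \<psi> where "\<psi> t = f (xt t) - f p" for t
  have xtX: "xt t \<in> X" if "0 \<le> t" "t \<le> 1" for t
  proof -
    have "xt t = (1 - t) *\<^sub>R p + t *\<^sub>R x" by (simp add: xt_def D_def algebra_simps)
    then show ?thesis using convexD_alt[OF cX pX x] that by simp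
  qed
  have psi0: "\<psi> t \<ge> 0" if "0 \<le> t" "t \<le> 1" for t
    using pmin[OF xtX[OF that]] by (simp add: \<psi>_def)
  have A: "t * (g (xt t) \<bullet> D) \<ge> \<psi> t + c * t\<^sup>2" if "0 \<le> t" "t \<le> 1" for t
  proof -
    have pr: "proj ?S (xt t) = p"
    proof -
      have p': "p = closest_point ?S x" using p by (simp add: proj_def)
      show ?thesis using closest_point_segment[OF cS clS ne p' that]
        by (simp add: proj_def xt_def D_def)
    qed
    have "f p \<ge> f (xt t) + g (xt t) \<bullet> (p - xt t) + \<kappa> / 2 * (norm (xt t - p))\<^sup>2"
      using qsc xtX[OF that] pr inf unfolding quasi_strongly_convex_def Let_def by auto
    moreover have "p - xt t = - (t *\<^sub>R D)" by (simp add: xt_def)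
    moreover have "(norm (xt t - p))\<^sup>2 = t\<^sup>2 * (norm D)\<^sup>2"
      by (simp add: xt_def power_mult_distrib)
    ultimately show ?thesis by (simp add: \<psi>_def c_def algebra_simps)
  qed
  have B: "\<psi> s \<ge> \<psi> t + (s - t) * (g (xt t) \<bullet> D)" if "0 \<le> t" "t \<le> 1" "0 \<le> s" "s \<le> 1" for s t
  proof -
    have "f (xt t) + g (xt t) \<bullet> (xt s - xt t) \<le> f (xt s)"
      by (rule grad_ineq[OF cX xtX[OF that(1,2)] xtX[OF that(3,4)] fc fg])
    moreover have "xt s - xt t = (s - t) *\<^sub>R D" by (simp add: xt_def algebra_simps)
    ultimately show ?thesis by (simp add: \<psi>_def)
  qed
  have step: "\<psi> s / s \<ge> \<psi> t / t + c * t * (s - t) / s" if "0 < t" "t \<le> s" "s \<le> 1" for s t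
  proof -
    let ?G = "g (xt t) \<bullet> D"
    have a: "t * ?G \<ge> \<psi> t + c * t\<^sup>2" using A[of t] that by simp
    have b: "\<psi> s \<ge> \<psi> t + (s - t) * ?G" using B[of t s] that by simp
    have "(s - t) * (t * ?G) \<ge> (s - t) * (\<psi> t + c * t\<^sup>2)"
      using a that by (intro mult_left_mono) auto
    then have e1: "(s - t) * (t * ?G) \<ge> (s - t) * \<psi> t + c * t\<^sup>2 * (s - t)"
      by (simp add: algebra_simps)
    have e2: "t * \<psi> s \<ge> t * \<psi> t + t * ((s - t) * ?G)"
      using b that by (metis distrib_left mult_left_mono less_imp_le)
    have "t * ((s - t) * ?G) = (s - t) * (t * ?G)" by simp
    then have "t * \<psi> s \<ge> t * \<psi> t + (s - t) * \<psi> t + c * t\<^sup>2 * (s - t)"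
      using e1 e2 by linarith
    then have "t * \<psi> s \<ge> s * \<psi> t + c * t\<^sup>2 * (s - t)"
      by (simp add: algebra_simps)
    then have H: "0 \<le> (t * \<psi> s - s * \<psi> t - c * t\<^sup>2 * (s - t)) / (t * s)"
      using that by (intro divide_nonneg_pos) auto
    have "\<psi> s / s - \<psi> t / t - c * t * (s - t) / s = (t * \<psi> s - s * \<psi> t - c * t\<^sup>2 * (s - t)) / (t * s)"
      using that by (simp add: field_simps power2_eq_square)
    then show ?thesis using H by linarith
  qed
  have ind: "\<psi> 1 \<ge> \<psi> (r ^ m) / r ^ m + c * (r * (1 - r ^ m))" if r: "0 < r" "r < 1" for r m
  proof (induction m)
    case 0 then show ?case by simp
  next
    case (Suc m)
    have "\<psi> (r ^ m) / r ^ m \<ge> \<psi> (r ^ Suc m) / r ^ Suc m + c * r ^ Suc m * (r ^ m - r ^ Suc m) / r ^ m"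
      using r by (intro step) (auto simp: power_le_one power_Suc_less)
    also have "c * r ^ Suc m * (r ^ m - r ^ Suc m) / r ^ m = c * r ^ Suc m * (1 - r)"
      using r by (simp add: field_simps)
    finally show ?case using Suc.IH by (simp add: algebra_simps)
  qed
  have "c \<le> \<psi> 1"
  proof (rule limit_arg)
    fix r :: real and m assume r: "0 < r" "r < 1"
    have "\<psi> (r ^ m) / r ^ m \<ge> 0" using r psi0[of "r ^ m"] by (simp add: power_le_one)
    then show "c * (r * (1 - r ^ m)) \<le> \<psi> 1" using ind[OF r, of m] by simp
  qed (simp add: c_def \<kappa>)
  then show ?thesis by (simp add: c_def \<psi>_def xt_def D_def)
qed


lemma alg:
  fixes q L Fx Fp aa bb ee ab ae be :: real
  assumes q0: "0 < q" and q1: "q \<le> 1" and L: "L > 0"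
    and h1: "Fp \<le> Fx + L * (q * (ae - be)) - L / 2 * ee"
    and h2: "Fp \<le> - (q\<^sup>2 * L) / 2 * bb + L * be - L / 2 * ee"
    and hab: "aa - 2 * ab + bb \<ge> 0"
  shows "Fp + (q\<^sup>2 * L) / 2 * ((1 - q)\<^sup>2 * aa + q\<^sup>2 * bb + ee / q\<^sup>2 + 2 * q * (1 - q) * ab
           - 2 * (1 - q) / q * ae - 2 * be) \<le> (1 - q) * (Fx + (q\<^sup>2 * L) / 2 * aa)"
proof -
  have e: "(q\<^sup>2 * L) / 2 * ((1 - q)\<^sup>2 * aa + q\<^sup>2 * bb + ee / q\<^sup>2 + 2 * q * (1 - q) * ab
           - 2 * (1 - q) / q * ae - 2 * be)
        = L / 2 * (q\<^sup>2 * (1 - q)\<^sup>2 * aa + q^4 * bb + ee + 2 * q^3 * (1 - q) * ab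
           - 2 * q * (1 - q) * ae - 2 * q\<^sup>2 * be)"
    using q0 by (simp add: field_simps power2_eq_square power3_eq_cube power4_eq_xxxx)
  have c1: "(1 - q) * Fp \<le> (1 - q) * (Fx + L * (q * (ae - be)) - L / 2 * ee)"
    using h1 q1 by (intro mult_left_mono) auto
  have c2: "q * Fp \<le> q * (- (q\<^sup>2 * L) / 2 * bb + L * be - L / 2 * ee)"
    using h2 q0 by (intro mult_left_mono) auto
  have c3: "0 \<le> L / 2 * q^3 * (1 - q) * (aa - 2 * ab + bb)"
    using hab q0 q1 L by (intro mult_nonneg_nonneg) auto
  have "(1 - q) * (Fx + (q\<^sup>2 * L) / 2 * aa) - (Fp + L / 2 * (q\<^sup>2 * (1 - q)\<^sup>2 * aa + q^4 * bb + ee + 2 * q^3 * (1 - q) * ab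
           - 2 * q * (1 - q) * ae - 2 * q\<^sup>2 * be))
      = ((1 - q) * (Fx + L * (q * (ae - be)) - L / 2 * ee) - (1 - q) * Fp)
        + (q * (- (q\<^sup>2 * L) / 2 * bb + L * be - L / 2 * ee) - q * Fp)
        + L / 2 * q^3 * (1 - q) * (aa - 2 * ab + bb)"
    by (simp add: field_simps power2_eq_square power3_eq_cube power4_eq_xxxx)
  then show ?thesis using e c1 c2 c3 by linarith
qed

theorem theorem14:
  fixes X :: "'a::euclidean_space set"
    and f :: "'a \<Rightarrow> real" and g :: "'a \<Rightarrow> 'a"
    and L \<kappa> :: real and x y :: "nat \<Rightarrow> 'a"
  assumes X_ne: "X \<noteq> {}" and X_closed: "closed X" and X_convex: "convex X"
    and f_convex: "convex_on X f"
    and f_grad: "\<And>z. z \<in> X \<Longrightarrow> (f has_derivative (\<lambda>h. g z \<bullet> h)) (at z within X)"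
    and g_cont: "continuous_on X g"
    and L_pos: "L > 0"
    and g_lip: "\<And>u v. u \<in> X \<Longrightarrow> v \<in> X \<Longrightarrow> norm (g u - g v) \<le> L * norm (u - v)"
    and bdd: "bdd_below (f ` X)"
    and opt_ne: "optset X f \<noteq> {}" and opt_closed: "closed (optset X f)"
    and \<kappa>_pos: "\<kappa> > 0"
    and qsc: "quasi_strongly_convex X f g \<kappa>"
    and x0: "x 0 \<in> X" and y0: "y 0 = x 0"
    and x_step: "\<And>k. x (Suc k) = proj X (y k - (1 / L) *\<^sub>R g (y k))"
    and y_step: "\<And>k. y (Suc k) = x (Suc k) +
          ((sqrt L - sqrt \<kappa>) / (sqrt L + sqrt \<kappa>)) *\<^sub>R (x (Suc k) - x k)"
    and y_in: "\<And>k. y k \<in> X"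
    and y_proj: "\<And>k. proj (optset X f) (y k) = proj (optset X f) (y 0)"
  shows "\<forall>k. f (x k) - (INF z\<in>X. f z)
           \<le> (1 - sqrt (\<kappa> / L)) ^ k * (2 * (f (x 0) - (INF z\<in>X. f z)))"
  proof -
  let ?S = "optset X f"
  define xs where "xs = proj ?S (y 0)"
  have xsS: "xs \<in> ?S" using closest_point_in_set[OF opt_closed opt_ne] by (simp add: xs_def proj_def)
  have xsX: "xs \<in> X" using xsS by (simp add: optset_def)
  have fs: "(INF z\<in>X. f z) = f xs" by (rule inf_eq_opt[OF xsS])
  have fmin: "\<And>z. z \<in> X \<Longrightarrow> f xs \<le> f z" using xsS by (simp add: optset_def)
  have projk: "proj ?S (y k) = xs" for k using y_proj xs_def by simp
  have xX: "x k \<in> X" for k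
  proof (cases k)
    case 0 then show ?thesis using x0 by simp
  next
    case (Suc j) then show ?thesis using x_step closest_point_in_set[OF X_closed X_ne] by (simp add: proj_def)
  qed
  have qsck: "f xs \<ge> f (y k) + g (y k) \<bullet> (xs - y k) + \<kappa> / 2 * (norm (y k - xs))\<^sup>2" for k
    using qsc y_in[of k] projk[of k] fs unfolding quasi_strongly_convex_def Let_def by auto
  have pstep: "f (x (Suc k)) \<le> f (y k) + g (y k) \<bullet> (z - y k) + L * ((y k - x (Suc k)) \<bullet> (y k - z))
      - L / 2 * ((y k - x (Suc k)) \<bullet> (y k - x (Suc k)))" if "z \<in> X" for k z
  proof -
    have e: "x (Suc k) = closest_point X (y k - (1 / L) *\<^sub>R g (y k))" using x_step[of k] by (simp add: proj_def)
    show ?thesis by (rule proj_step[OF X_convex X_closed y_in that L_pos f_grad g_lip e])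
  qed
  have desck: "f xs \<le> f (y k) + g (y k) \<bullet> (xs - y k) + L / 2 * (norm (xs - y k))\<^sup>2" for k
    by (rule descent[OF X_convex y_in xsX f_grad g_lip])
  show ?thesis
  proof (cases "\<kappa> \<le> L")
    case False
    have yk: "y k = xs" for k
    proof -
      have "(\<kappa> - L) / 2 * (norm (y k - xs))\<^sup>2 \<le> 0"
        using qsck[of k] desck[of k] by (simp add: norm_minus_commute algebra_simps)
      then have "(norm (y k - xs))\<^sup>2 \<le> 0" using False
        by (simp add: mult_le_0_iff)
      then show ?thesis by simp
    qed
    have fx: "f (x k) = f xs" for k
    proof (cases k)
      case 0 then show ?thesis using yk[of 0] y0 by simp
    next
      case (Suc j)
      have "f (x (Suc j)) \<le> f xs - L / 2 * ((xs - x (Suc j)) \<bullet> (xs - x (Suc j)))"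
        using pstep[OF xsX, of j] yk[of j] by simp
      moreover have "L / 2 * ((xs - x (Suc j)) \<bullet> (xs - x (Suc j))) \<ge> 0" using L_pos by simp
      ultimately show ?thesis using fmin[OF xX[of "Suc j"]] Suc by simp
    qed
    show ?thesis using fx fs by simp
  next
    case True
    define q where "q = sqrt (\<kappa> / L)"
    have q0: "q > 0" using \<kappa>_pos L_pos by (simp add: q_def)
    have q1: "q \<le> 1" using True L_pos by (simp add: q_def)
    have qL: "q\<^sup>2 * L = \<kappa>" using \<kappa>_pos L_pos by (simp add: q_def)
    have beta: "(sqrt L - sqrt \<kappa>) / (sqrt L + sqrt \<kappa>) = (1 - q) / (1 + q)"
    proof -
      have sL: "sqrt L > 0" using L_pos by simp
      have "q = sqrt \<kappa> / sqrt L" by (simp add: q_def real_sqrt_divide)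
      then have sk: "sqrt \<kappa> = q * sqrt L" using sL by (simp add: field_simps)
      have "(sqrt L - sqrt \<kappa>) / (sqrt L + sqrt \<kappa>) = ((1 - q) * sqrt L) / ((1 + q) * sqrt L)"
        by (simp add: sk algebra_simps)
      also have "\<dots> = (1 - q) / (1 + q)" using sL by simp
      finally show ?thesis .
    qed
    define v where "v k = (case k of 0 \<Rightarrow> x 0 | Suc j \<Rightarrow> x j + (1 / q) *\<^sub>R (x (Suc j) - x j))" for k
    have yv: "(1 + q) *\<^sub>R y k = x k + q *\<^sub>R v k" for k
    proof (cases k)
      case 0 then show ?thesis using y0 by (simp add: v_def algebra_simps)
    next
      case (Suc j)
      have "(1 + q) *\<^sub>R y (Suc j) = (1 + q) *\<^sub>R x (Suc j) + (1 - q) *\<^sub>R (x (Suc j) - x j)"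
        using y_step[of j] beta q0 by (simp add: scaleR_add_right)
      also have "\<dots> = x (Suc j) + q *\<^sub>R (x j + (1 / q) *\<^sub>R (x (Suc j) - x j))"
        using q0 by (simp add: algebra_simps)
      finally show ?thesis using Suc by (simp add: v_def)
    qed
    define V where "V k = f (x k) - f xs + \<kappa> / 2 * (norm (v k - xs))\<^sup>2" for k
    have Vstep: "V (Suc k) \<le> (1 - q) * V k" for k
    proof -
      define a where "a = v k - xs"
      define b where "b = y k - xs"
      define e where "e = y k - x (Suc k)"
      have xk: "x k = (1 + q) *\<^sub>R y k - q *\<^sub>R v k" using yv[of k] by (simp add: algebra_simps)
      have yx: "y k - x k = q *\<^sub>R (a - b)" using xk by (simp add: a_def b_def algebra_simps)
      have vS: "v (Suc k) - xs = (1 - q) *\<^sub>R a + q *\<^sub>R b - (1 / q) *\<^sub>R e"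
      proof -
        have vs: "v (Suc k) = x k + (1 / q) *\<^sub>R (x (Suc k) - x k)" by (simp add: v_def)
        have "q *\<^sub>R (v (Suc k) - xs) = (q - 1) *\<^sub>R x k + x (Suc k) - q *\<^sub>R xs"
          using q0 by (simp add: vs algebra_simps)
        also have "\<dots> = (q - 1) *\<^sub>R ((1 + q) *\<^sub>R y k - q *\<^sub>R v k) + (y k - e) - q *\<^sub>R xs"
          by (simp only: xk[symmetric]) (simp add: e_def)
        also have "\<dots> = q *\<^sub>R ((1 - q) *\<^sub>R a + q *\<^sub>R b) - e"
          by (simp add: a_def b_def algebra_simps)
        also have "\<dots> = q *\<^sub>R ((1 - q) *\<^sub>R a + q *\<^sub>R b - (1 / q) *\<^sub>R e)"
          using q0 by (simp add: scaleR_diff_right)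
        finally have "q *\<^sub>R (v (Suc k) - xs) = q *\<^sub>R ((1 - q) *\<^sub>R a + q *\<^sub>R b - (1 / q) *\<^sub>R e)" .
        then show ?thesis using q0 by simp
      qed
      have h1: "f (x (Suc k)) - f xs \<le> (f (x k) - f xs) + L * (q * (e \<bullet> a - e \<bullet> b)) - L / 2 * (e \<bullet> e)"
      proof -
        have "f (x (Suc k)) \<le> f (y k) + g (y k) \<bullet> (x k - y k) + L * (e \<bullet> (y k - x k)) - L / 2 * (e \<bullet> e)"
          using pstep[OF xX[of k], of k] by (simp add: e_def)
        moreover have "f (y k) + g (y k) \<bullet> (x k - y k) \<le> f (x k)"
          by (rule grad_ineq[OF X_convex y_in xX f_convex f_grad])
        moreover have "L * (e \<bullet> (y k - x k)) = L * (q * (e \<bullet> a - e \<bullet> b))" by (simp add: yx inner_diff_right)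
        ultimately show ?thesis by linarith
      qed
      have h2: "f (x (Suc k)) - f xs \<le> - (q\<^sup>2 * L) / 2 * (b \<bullet> b) + L * (e \<bullet> b) - L / 2 * (e \<bullet> e)"
      proof -
        have "f (x (Suc k)) \<le> f (y k) + g (y k) \<bullet> (xs - y k) + L * (e \<bullet> b) - L / 2 * (e \<bullet> e)"
          using pstep[OF xsX, of k] by (simp add: e_def b_def)
        moreover have "(norm (y k - xs))\<^sup>2 = b \<bullet> b" by (simp add: b_def power2_norm_eq_inner)
        ultimately show ?thesis using qsck[of k] qL by simp
      qed
      have hab: "a \<bullet> a - 2 * (a \<bullet> b) + b \<bullet> b \<ge> 0"
      proof -
        have "0 \<le> (a - b) \<bullet> (a - b)" by simp
        then show ?thesis by (simp add: inner_diff_left inner_diff_right inner_commute)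
      qed
      have N: "(norm (v (Suc k) - xs))\<^sup>2 = (1 - q)\<^sup>2 * (a \<bullet> a) + q\<^sup>2 * (b \<bullet> b) + (e \<bullet> e) / q\<^sup>2
          + 2 * q * (1 - q) * (a \<bullet> b) - 2 * (1 - q) / q * (e \<bullet> a) - 2 * (e \<bullet> b)"
        unfolding vS power2_norm_eq_inner
        using q0 by (simp add: inner_add_left inner_add_right inner_diff_left inner_diff_right
            inner_commute[of b a] inner_commute[of a e] inner_commute[of b e] field_simps power2_eq_square)
      have "V (Suc k) = (f (x (Suc k)) - f xs) + (q\<^sup>2 * L) / 2 * ((1 - q)\<^sup>2 * (a \<bullet> a) + q\<^sup>2 * (b \<bullet> b) + (e \<bullet> e) / q\<^sup>2
          + 2 * q * (1 - q) * (a \<bullet> b) - 2 * (1 - q) / q * (e \<bullet> a) - 2 * (e \<bullet> b))"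
        by (simp add: V_def N qL)
      also have "\<dots> \<le> (1 - q) * ((f (x k) - f xs) + (q\<^sup>2 * L) / 2 * (a \<bullet> a))"
        by (rule alg[OF q0 q1 L_pos h1 h2 hab])
      also have "\<dots> = (1 - q) * V k" by (simp add: V_def qL a_def power2_norm_eq_inner)
      finally show ?thesis .
    qed
    have Vk: "V k \<le> (1 - q) ^ k * V 0" for k
    proof (induction k)
      case 0 then show ?case by simp
    next
      case (Suc k)
      have "V (Suc k) \<le> (1 - q) * V k" by (rule Vstep)
      also have "\<dots> \<le> (1 - q) * ((1 - q) ^ k * V 0)" using Suc q1 by (intro mult_left_mono) auto
      finally show ?case by simp
    qed
    have V0: "V 0 \<le> 2 * (f (x 0) - f xs)"
    proof -
      have "\<kappa> / 2 * (norm (x 0 - xs))\<^sup>2 \<le> f (x 0) - f xs"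
        using quad_growth[OF X_convex f_convex f_grad x0 opt_ne opt_closed qsc] \<kappa>_pos xs_def y0 by simp
      then show ?thesis by (simp add: V_def v_def)
    qed
    show ?thesis
    proof
      fix k
      have "f (x k) - f xs \<le> V k" using \<kappa>_pos by (simp add: V_def)
      also have "\<dots> \<le> (1 - q) ^ k * V 0" by (rule Vk)
      also have "\<dots> \<le> (1 - q) ^ k * (2 * (f (x 0) - f xs))" using V0 q1 by (intro mult_left_mono) auto
      finally show "f (x k) - (INF z\<in>X. f z) \<le> (1 - sqrt (\<kappa> / L)) ^ k * (2 * (f (x 0) - (INF z\<in>X. f z)))"
        by (simp add: fs q_def)
    qed
  qed
qed

end
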